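(* Let $N\ge1$ and let $\lambda$ be a partition with $l(\lambda)\le N$. Then in $\mathbb Q(q,t)$: $$\frac{c_\lambda(q,t)}{\prod_{s\in\lambda}\bigl(1-q^{a'(s)}t^{N-l'(s)}\bigr)}=\frac{c_{\overline\lambda}(q,t)}{\prod_{s\in\overline\lambda}\bigl(1-q^{a'(s)}t^{N-l'(s)}\bigr)},\qquad \frac{c'_\lambda(q,t)}{\prod_{s\in\lambda}\bigl(1-q^{a'(s)+1}t^{N-1-l'(s)}\bigr)}=\frac{c'_{\overline\lambda}(q,t)}{\prod_{s\in\overline\lambda}\bigl(1-q^{a'(s)+1}t^{N-1-l'(s)}\bigr)},$$ where arm/leg quantities in products over $\overline\lambda$ are computed in $\overline\lambda$.
   Context: Partitions $\lambda=(\lambda_1\ge\lambda_2\ge\cdots)$ are identified with Young diagrams $\{(i,j): i\ge1,\ 1\le j\le\lambda_i\}$; $\lambda^t$ is the transpose, $l(\lambda)$ the number of nonzero parts. For a box $s=(i,j)\in\lambda$: arm $a(s)=\lambda_i-j$, leg $l(s)=\lambda^t_j-i$, arm-colength $a'(s)=j-1$, leg-colength $l'(s)=i-1$. Set $c_\lambda(q,t)=\prod_{s\in\lambda}(1-q^{a(s)}t^{l(s)+1})$, $c'_\lambda(q,t)=\prod_{s\in\lambda}(1-q^{a(s)+1}t^{l(s)})$. For $l(\lambda)\le N$, $\overline{\lambda}=(\lambda_1-\lambda_N,\dots,\lambda_{N-1}-\lambda_N)$ (remove all columns of height $N$). (Note the denominators are never identically zero for $l(\lambda)\le N$, as $l'(s)\le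 N-1$.) *)

theory Defs
  imports "HOL-Computational_Algebra.Polynomial" "HOL-Computational_Algebra.Fraction_Field"
begin

text \<open>Partitions are nonincreasing lists of positive naturals;
 l(lambda) is the length. Rows are indexed from 1.\<close>

definition is_partition :: "nat list \<Rightarrow> bool" where
  "is_partition lam \<longleftrightarrow> sorted_wrt (\<ge>) lam \<and> 0 \<notin> set lam"

definition part :: "nat list \<Rightarrow> nat \<Rightarrow> nat" where
  "part lam i = (if 1 \<le> i \<and> i \<le> length lam then lam ! (i - 1) else 0)"

definition diagram :: "nat list \<Rightarrow> (nat \<times> nat) set" where
  "diagram lam = {(i, j). 1 \<le> i \<and> 1 \<le> j \<and> j \<le> part lam i}"

definition conj_part :: "nat list \<Rightarrow> nat \<Rightarrow> nat" where
  "conj_part lam j = card {i. 1 \<le> i \<and> i \<le> length lam \<and> j \<le> part lam i}"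

definition arm :: "nat list \<Rightarrow> nat \<times> nat \<Rightarrow> nat" where
  "arm lam s = part lam (fst s) - snd s"
definition leg :: "nat list \<Rightarrow> nat \<times> nat \<Rightarrow> nat" where
  "leg lam s = conj_part lam (snd s) - fst s"
definition arm_co :: "nat \<times> nat \<Rightarrow> nat" where
  "arm_co s = snd s - 1"
definition leg_co :: "nat \<times> nat \<Rightarrow> nat" where
  "leg_co s = fst s - 1"

text \<open>lambda-bar: remove all columns of height N.\<close>
definition bar :: "nat \<Rightarrow> nat list \<Rightarrow> nat list" where
  "bar N lam = filter (\<lambda>x. 0 < x) (map (\<lambda>x. x - part lam N) (take (N - 1) lam))"

text \<open>The field Q(q,t) realised as the fraction field of Q[q][t]:
 t is the outer polynomial variable, q the inner one.\<close>
type_synonym qt = "rat poly poly fract"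

definition qv :: qt where "qv = Fract [:[:0, 1:]:] 1"
definition tv :: qt where "tv = Fract [:0, 1:] 1"

definition c_lam :: "nat list \<Rightarrow> qt" where
  "c_lam lam = (\<Prod>s\<in>diagram lam. 1 - qv ^ arm lam s * tv ^ (leg lam s + 1))"
definition c'_lam :: "nat list \<Rightarrow> qt" where
  "c'_lam lam = (\<Prod>s\<in>diagram lam. 1 - qv ^ (arm lam s + 1) * tv ^ leg lam s)"

end

theory Submission
  imports Defs
begin

lemma part_out: "length lam < i \<Longrightarrow> part lam i = 0"
  by (simp add: part_def)

lemma part_mono:
  assumes "is_partition lam" "1 \<le> i" "i \<le> i'"
  shows "part lam i' \<le> part lam i"
proof (cases "i' \<le> length lam")
  case False thus ?thesis by (simp add: part_def)
next
  case True
  show ?thesis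
  proof (cases "i = i'")
    case False
    hence "i - 1 < i' - 1" using assms by simp
    moreover have "i' - 1 < length lam" using True assms by simp
    ultimately have "lam ! (i' - 1) \<le> lam ! (i - 1)"
      using assms(1) unfolding is_partition_def using sorted_wrt_nth_less by fastforce
    thus ?thesis using True assms by (simp add: part_def)
  qed simp
qed

lemma filter_takeWhile_sorted:
  "sorted_wrt (\<ge>) (xs::nat list) \<Longrightarrow> filter (\<lambda>x. 0 < x) xs = takeWhile (\<lambda>x. 0 < x) xs"
proof (induction xs)
  case (Cons x xs)
  show ?case
  proof (cases "0 < x")
    case False
    hence "\<forall>y\<in>set xs. y = 0" using Cons.prems by auto
    thus ?thesis using False by (simp add: filter_empty_conv)
  qed (use Cons in auto)
qed simp

lemma part_bar:
  assumes N: "N \<ge> 1" and P: "is_partition lam" and L: "length lam \<le> N"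
  shows "part (bar N lam) i = part lam i - part lam N"
proof -
  define m where "m = part lam N"
  define xs where "xs = map (\<lambda>x. x - m) (take (N - 1) lam)"
  have sx: "sorted_wrt (\<ge>) xs"
  proof -
    have "sorted_wrt (\<ge>) (take (N-1) lam)" using P
      by (simp add: is_partition_def sorted_wrt_take)
    thus ?thesis unfolding xs_def by (simp add: sorted_wrt_map sorted_wrt_mono_rel[of _ "(\<ge>)"] )
  qed
  have B: "bar N lam = takeWhile (\<lambda>x. 0 < x) xs"
    unfolding bar_def xs_def[symmetric] m_def[symmetric] using filter_takeWhile_sorted[OF sx] .
  have lxs: "length xs = min (N-1) (length lam)" by (simp add: xs_def)
  have nxs: "k < length xs \<Longrightarrow> xs ! k = part lam (Suc k) - m" for k
    using lxs by (simp add: xs_def part_def)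
  show ?thesis
  proof (cases "1 \<le> i \<and> i \<le> length (bar N lam)")
    case True
    hence "part (bar N lam) i = xs ! (i - 1)" unfolding B using takeWhile_nth[of "i-1" "\<lambda>x. 0 < x" xs] by (simp add: part_def) linarith
    also have "\<dots> = part lam i - m" using True nxs[of "i-1"] length_takeWhile_le[of _ xs] B
      by (metis Suc_diff_1 diff_less_Suc less_le_trans order_less_le_trans zero_less_one le_eq_less_or_eq
          Suc_le_eq less_imp_le_nat not_less_eq)
    finally show ?thesis by (simp add: m_def)
  next
    case False
    hence z: "part (bar N lam) i = 0" unfolding part_def by auto
    show ?thesis
    proof (cases "i = 0")
      case True thus ?thesis using z by (simp add: part_def)
    next
      case i0: False
      hence lb: "length (bar N lam) < i" using False by simp
      show ?thesis
      proof (cases "i - 1 < length xs")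
        case True
        let ?k = "length (takeWhile (\<lambda>x. 0 < x) xs)"
        have klt: "?k \<le> i - 1" using lb B by simp
        have kl: "?k < length xs" using klt True by simp
        have "\<not> 0 < xs ! ?k" using nth_length_takeWhile[OF kl] .
        moreover have "xs ! (i-1) \<le> xs ! ?k"
        proof (cases "?k = i - 1")
          case False
          thus ?thesis using sorted_wrt_nth_less[OF sx, of ?k "i-1"] klt True by simp
        qed simp
        ultimately have "xs ! (i-1) = 0" by simp
        thus ?thesis using nxs[OF True] i0 z by (simp add: m_def)
      next
        case False
        show ?thesis
        proof (cases "length lam < i")
          case True thus ?thesis using z by (simp add: part_def)
        next
          case False2: False
          hence "N \<le> i" using False lxs i0 by linarith
          hence "part lam i \<le> part lam N" using part_mono[OF P N] by simp
          thus ?thesis using z by simp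
        qed
      qed
    qed
  qed
qed

lemma fp: "(Fract (a::'a::idom) 1) ^ n = Fract (a^n) 1"
  by (induction n) (simp_all add: One_fract_def)
lemma key: "qv ^ a * tv ^ b = 1 \<Longrightarrow> a = 0 \<and> b = 0"
proof -
  assume h: "qv ^ a * tv ^ b = 1"
  have "qv ^ a * tv ^ b = Fract (monom ([:0,1:]^a) b) 1"
    unfolding qv_def tv_def fp mult_fract
    by (simp add: poly_const_pow monom_altdef)
  with h have e: "monom ([:0,1:]^a) b = (1 :: rat poly poly)"
    by (simp add: One_fract_def eq_fract)
  have x: "[:0,1:]^a = (monom 1 a :: rat poly)" by (simp add: monom_altdef)
  have "degree (monom ([:0,1:]^a) b :: rat poly poly) = b"
    by (rule degree_monom_eq) simp
  with e have b: "b = 0" by simp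
  have "coeff (monom ([:0,1:]^a) b :: rat poly poly) 0 = 1" using e by simp
  with b have "(monom 1 a :: rat poly) = 1" using x by simp
  hence "degree (monom 1 a :: rat poly) = 0" by simp
  hence "a = 0" by (simp add: degree_monom_eq)
  with b show ?thesis by simp
qed

lemma T_nz: "a \<noteq> 0 \<or> b \<noteq> 0 \<Longrightarrow> 1 - qv ^ a * tv ^ b \<noteq> 0"
  using key by force

lemma diag: "length lam \<le> N \<Longrightarrow> diagram lam = Sigma {1..N} (\<lambda>i. {1..part lam i})"
  unfolding diagram_def by (auto simp: part_def split: if_splits)

lemma prod_Sigma': "finite A \<Longrightarrow> (\<And>x. finite (B x)) \<Longrightarrow>
   prod g (Sigma A B) = (\<Prod>x\<in>A. \<Prod>y\<in>B x. g (x,y))"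
  by (subst prod.Sigma) auto

lemma conj_alt: "1 \<le> j \<Longrightarrow> conj_part l j = card {i. 1 \<le> i \<and> j \<le> part l i}"
  unfolding conj_part_def
  by (rule arg_cong[where f=card]) (auto simp: part_def split: if_splits)

lemma split_prod: "m \<le> (n::nat) \<Longrightarrow> (\<Prod>j\<in>{1..n}. h j) = (\<Prod>j\<in>{1..m}. h j) * (\<Prod>j\<in>{1..n-m}. h (j+m))"
proof -
  assume mn: "m \<le> n"
  have "{1..n} = {1..m} \<union> {m+1..n}" using mn by auto
  hence "(\<Prod>j\<in>{1..n}. h j) = (\<Prod>j\<in>{1..m}. h j) * (\<Prod>j\<in>{m+1..n}. h j)"
    by (simp add: prod.union_disjoint)
  moreover have "(\<Prod>j\<in>{m+1..n}. h j) = (\<Prod>j\<in>{1..n-m}. h (j+m))"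
  proof -
    have "prod h {1+m..(n-m)+m} = (\<Prod>j\<in>{1..n-m}. h (j+m))"
      by (rule prod.shift_bounds_cl_nat_ivl)
    thus ?thesis using mn by (simp add: add.commute)
  qed
  ultimately show ?thesis by simp
qed

lemma rowden: "m \<le> (n::nat) \<Longrightarrow> (\<Prod>j\<in>{1..n}. h (j-1)) = (\<Prod>j\<in>{1..m}. h (n-j)) * (\<Prod>j\<in>{1..n-m}. h (j-1))"
proof -
  assume mn: "m \<le> n"
  have "(\<Prod>j\<in>{1..n}. h (j-1)) = (\<Prod>j\<in>{1..n-m}. h (j-1)) * (\<Prod>j\<in>{1..m}. h (j + (n-m) - 1))"
    using split_prod[of "n-m" n "\<lambda>j. h (j-1)"] mn by simp
  moreover have "(\<Prod>j\<in>{1..m}. h (n-j)) = (\<Prod>j\<in>{1..m}. h (j + (n-m) - 1))"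
  proof -
    have "(\<Prod>j\<in>{1..m}. h (n-j)) = (\<Prod>j\<in>{1..m}. h (n - (1 + m - j)))"
      using prod.atLeastAtMost_rev[where g="\<lambda>k. h (n - k)" and n=1 and m=m] by (simp add: add.commute)
    also have "\<dots> = (\<Prod>j\<in>{1..m}. h (j + (n-m) - 1))"
      by (rule prod.cong) (use mn in \<open>auto simp: add.commute\<close>)
    finally show ?thesis .
  qed
  ultimately show ?thesis by (simp add: mult.commute)
qed


lemma main:
  fixes N :: nat and lam :: "nat list"
  assumes N: "N \<ge> 1" and P: "is_partition lam" and L: "length lam \<le> N"
  shows "c_lam lam / (\<Prod>s\<in>diagram lam. 1 - qv ^ arm_co s * tv ^ (N - leg_co s))
           = c_lam (bar N lam) / (\<Prod>s\<in>diagram (bar N lam). 1 - qv ^ arm_co s * tv ^ (N - leg_co s))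
         \<and> c'_lam lam / (\<Prod>s\<in>diagram lam. 1 - qv ^ (arm_co s + 1) * tv ^ (N - 1 - leg_co s))
           = c'_lam (bar N lam) / (\<Prod>s\<in>diagram (bar N lam). 1 - qv ^ (arm_co s + 1) * tv ^ (N - 1 - leg_co s))"
proof -
  define m where "m = part lam N"
  define p where "p = part lam"
  have pb: "part (bar N lam) i = p i - m" for i using part_bar[OF N P L] by (simp add: m_def p_def)
  have pm: "m \<le> p i" if "1 \<le> i" "i \<le> N" for i using part_mono[OF P that] by (simp add: m_def p_def)
  have D: "diagram lam = Sigma {1..N} (\<lambda>i. {1..p i})" using diag[OF L] by (simp add: p_def)
  have Db: "diagram (bar N lam) = Sigma {1..N} (\<lambda>i. {1..p i - m})"
    unfolding diagram_def pb using L by (auto simp: p_def part_def split: if_splits)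
  have cf: "conj_part lam j = N" if "1 \<le> j" "j \<le> m" for j
  proof -
    have "{i. 1 \<le> i \<and> j \<le> part lam i} = {1..N}"
    proof (intro set_eqI iffI)
      fix i assume "i \<in> {i. 1 \<le> i \<and> j \<le> part lam i}"
      thus "i \<in> {1..N}" using L that by (auto simp: part_def split: if_splits)
    next
      fix i assume "i \<in> {1..N}"
      thus "i \<in> {i. 1 \<le> i \<and> j \<le> part lam i}" using pm[of i] that by (auto simp: p_def)
    qed
    thus ?thesis using conj_alt[OF that(1)] by simp
  qed
  have cb: "conj_part (bar N lam) j = conj_part lam (j + m)" if "1 \<le> j" for j
  proof -
    have "{i. 1 \<le> i \<and> j \<le> part (bar N lam) i} = {i. 1 \<le> i \<and> j + m \<le> part lam i}"
      unfolding pb p_def using that by auto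
    thus ?thesis using conj_alt[OF that] conj_alt[of "j+m" lam] that by simp
  qed
  have armb: "arm (bar N lam) (i,j) = p i - (j+m)" for i j
    unfolding arm_def pb by simp
  have legb: "leg (bar N lam) (i,j) = conj_part lam (j+m) - i" if "1 \<le> j" for i j
    unfolding leg_def using cb[OF that] by simp
  have fin: "finite {1..N}" "\<And>f. finite {1..f::nat}" by auto
  
  define F where "F i j = 1 - qv ^ (p i - j) * tv ^ (conj_part lam j - i + 1)" for i j
  define X where "X = (\<Prod>i\<in>{1..N}. \<Prod>j\<in>{1..m}. F i j)"
  have A1: "c_lam lam = X * c_lam (bar N lam)"
  proof -
    have "c_lam lam = (\<Prod>i\<in>{1..N}. \<Prod>j\<in>{1..p i}. F i j)"
      unfolding c_lam_def D prod_Sigma'[OF fin] F_def arm_def leg_def p_def by simp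
    also have "\<dots> = (\<Prod>i\<in>{1..N}. (\<Prod>j\<in>{1..m}. F i j) * (\<Prod>j\<in>{1..p i - m}. F i (j+m)))"
      by (rule prod.cong[OF refl]) (rule split_prod, use pm in auto)
    also have "\<dots> = X * (\<Prod>i\<in>{1..N}. \<Prod>j\<in>{1..p i - m}. F i (j+m))"
      by (simp add: prod.distrib X_def)
    also have "(\<Prod>i\<in>{1..N}. \<Prod>j\<in>{1..p i - m}. F i (j+m)) = c_lam (bar N lam)"
      unfolding c_lam_def Db prod_Sigma'[OF fin]
      by (intro prod.cong refl) (auto simp only: F_def armb legb atLeastAtMost_iff)
    finally show ?thesis .
  qed
  have B1: "(\<Prod>s\<in>diagram lam. 1 - qv ^ arm_co s * tv ^ (N - leg_co s))
     = X * (\<Prod>s\<in>diagram (bar N lam). 1 - qv ^ arm_co s * tv ^ (N - leg_co s))"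
  proof -
    have "(\<Prod>s\<in>diagram lam. 1 - qv ^ arm_co s * tv ^ (N - leg_co s))
       = (\<Prod>i\<in>{1..N}. \<Prod>j\<in>{1..p i}. 1 - qv ^ (j-1) * tv ^ (N - (i - 1)))"
      unfolding D prod_Sigma'[OF fin] arm_co_def leg_co_def by simp
    also have "\<dots> = (\<Prod>i\<in>{1..N}. (\<Prod>j\<in>{1..m}. F i j) * (\<Prod>j\<in>{1..p i - m}. 1 - qv ^ (j-1) * tv ^ (N - (i - 1))))"
    proof (rule prod.cong[OF refl])
      fix i assume i: "i \<in> {1..N}"
      have "(\<Prod>j\<in>{1..p i}. 1 - qv ^ (j-1) * tv ^ (N - (i - 1))) =
        (\<Prod>j\<in>{1..m}. 1 - qv ^ (p i - j) * tv ^ (N - (i - 1))) * (\<Prod>j\<in>{1..p i - m}. 1 - qv ^ (j-1) * tv ^ (N - (i - 1)))"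
        by (rule rowden[where h="\<lambda>k. 1 - qv ^ k * tv ^ (N - (i - 1))"]) (use pm i in auto)
      also have "(\<Prod>j\<in>{1..m}. 1 - qv ^ (p i - j) * tv ^ (N - (i - 1))) = (\<Prod>j\<in>{1..m}. F i j)"
      proof (rule prod.cong[OF refl])
        fix j assume j: "j \<in> {1..m}"
        have c: "conj_part lam j - i + 1 = N - (i - 1)" using cf j i by auto
        show "1 - qv ^ (p i - j) * tv ^ (N - (i - 1)) = F i j"
          unfolding F_def c ..
      qed
      finally show "(\<Prod>j\<in>{1..p i}. 1 - qv ^ (j-1) * tv ^ (N - (i - 1))) =
        (\<Prod>j\<in>{1..m}. F i j) * (\<Prod>j\<in>{1..p i - m}. 1 - qv ^ (j-1) * tv ^ (N - (i - 1)))" .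
    qed
    also have "\<dots> = X * (\<Prod>s\<in>diagram (bar N lam). 1 - qv ^ arm_co s * tv ^ (N - leg_co s))"
      unfolding Db prod_Sigma'[OF fin] arm_co_def leg_co_def by (simp add: prod.distrib X_def)
    finally show ?thesis .
  qed
  have X0: "X \<noteq> 0"
  proof -
    have "F i j \<noteq> 0" for i j
      unfolding F_def by (intro T_nz) auto
    thus ?thesis unfolding X_def by auto
  qed
  
  define F' where "F' i j = 1 - qv ^ (p i - j + 1) * tv ^ (conj_part lam j - i)" for i j
  define X' where "X' = (\<Prod>i\<in>{1..N}. \<Prod>j\<in>{1..m}. F' i j)"
  have A2: "c'_lam lam = X' * c'_lam (bar N lam)"
  proof -
    have "c'_lam lam = (\<Prod>i\<in>{1..N}. \<Prod>j\<in>{1..p i}. F' i j)"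
      unfolding c'_lam_def D prod_Sigma'[OF fin] F'_def arm_def leg_def p_def by simp
    also have "\<dots> = (\<Prod>i\<in>{1..N}. (\<Prod>j\<in>{1..m}. F' i j) * (\<Prod>j\<in>{1..p i - m}. F' i (j+m)))"
      by (rule prod.cong[OF refl]) (rule split_prod, use pm in auto)
    also have "\<dots> = X' * (\<Prod>i\<in>{1..N}. \<Prod>j\<in>{1..p i - m}. F' i (j+m))"
      by (simp add: prod.distrib X'_def)
    also have "(\<Prod>i\<in>{1..N}. \<Prod>j\<in>{1..p i - m}. F' i (j+m)) = c'_lam (bar N lam)"
      unfolding c'_lam_def Db prod_Sigma'[OF fin]
      by (intro prod.cong refl) (auto simp only: F'_def armb legb atLeastAtMost_iff)
    finally show ?thesis .
  qed
  have B2: "(\<Prod>s\<in>diagram lam. 1 - qv ^ (arm_co s + 1) * tv ^ (N - 1 - leg_co s))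
     = X' * (\<Prod>s\<in>diagram (bar N lam). 1 - qv ^ (arm_co s + 1) * tv ^ (N - 1 - leg_co s))"
  proof -
    have "(\<Prod>s\<in>diagram lam. 1 - qv ^ (arm_co s + 1) * tv ^ (N - 1 - leg_co s))
       = (\<Prod>i\<in>{1..N}. \<Prod>j\<in>{1..p i}. 1 - qv ^ ((j-1)+1) * tv ^ (N - 1 - (i - 1)))"
      unfolding D prod_Sigma'[OF fin] arm_co_def leg_co_def by simp
    also have "\<dots> = (\<Prod>i\<in>{1..N}. (\<Prod>j\<in>{1..m}. F' i j) * (\<Prod>j\<in>{1..p i - m}. 1 - qv ^ ((j-1)+1) * tv ^ (N - 1 - (i - 1))))"
    proof (rule prod.cong[OF refl])
      fix i assume i: "i \<in> {1..N}"
      have "(\<Prod>j\<in>{1..p i}. 1 - qv ^ ((j-1)+1) * tv ^ (N - 1 - (i - 1))) =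
        (\<Prod>j\<in>{1..m}. 1 - qv ^ ((p i - j)+1) * tv ^ (N - 1 - (i - 1))) * (\<Prod>j\<in>{1..p i - m}. 1 - qv ^ ((j-1)+1) * tv ^ (N - 1 - (i - 1)))"
        by (rule rowden[where h="\<lambda>k. 1 - qv ^ (k+1) * tv ^ (N - 1 - (i - 1))"]) (use pm i in auto)
      also have "(\<Prod>j\<in>{1..m}. 1 - qv ^ ((p i - j)+1) * tv ^ (N - 1 - (i - 1))) = (\<Prod>j\<in>{1..m}. F' i j)"
      proof (rule prod.cong[OF refl])
        fix j assume j: "j \<in> {1..m}"
        have c: "conj_part lam j = N" using cf j by auto
        have e: "N - 1 - (i - 1) = N - i" using i by auto
        show "1 - qv ^ ((p i - j)+1) * tv ^ (N - 1 - (i - 1)) = F' i j"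
          unfolding F'_def c e ..
      qed
      finally show "(\<Prod>j\<in>{1..p i}. 1 - qv ^ ((j-1)+1) * tv ^ (N - 1 - (i - 1))) =
        (\<Prod>j\<in>{1..m}. F' i j) * (\<Prod>j\<in>{1..p i - m}. 1 - qv ^ ((j-1)+1) * tv ^ (N - 1 - (i - 1)))" .
    qed
    also have "\<dots> = X' * (\<Prod>s\<in>diagram (bar N lam). 1 - qv ^ (arm_co s + 1) * tv ^ (N - 1 - leg_co s))"
      unfolding Db prod_Sigma'[OF fin] arm_co_def leg_co_def by (simp add: prod.distrib X'_def)
    finally show ?thesis .
  qed
  have X0': "X' \<noteq> 0"
  proof -
    have "F' i j \<noteq> 0" if "j \<in> {1..m}" "i \<in> {1..N}" for i j
      unfolding F'_def using pm[of i] that by (intro T_nz) auto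
    thus ?thesis unfolding X'_def by auto
  qed
  show ?thesis using A1 B1 A2 B2 X0 X0' by simp
qed

theorem lemma2p4:
  fixes N :: nat and lam :: "nat list"
  assumes "N \<ge> 1" and "is_partition lam" and "length lam \<le> N"
  shows "c_lam lam / (\<Prod>s\<in>diagram lam. 1 - qv ^ arm_co s * tv ^ (N - leg_co s))
           = c_lam (bar N lam) / (\<Prod>s\<in>diagram (bar N lam). 1 - qv ^ arm_co s * tv ^ (N - leg_co s))
         \<and> c'_lam lam / (\<Prod>s\<in>diagram lam. 1 - qv ^ (arm_co s + 1) * tv ^ (N - 1 - leg_co s))
           = c'_lam (bar N lam) / (\<Prod>s\<in>diagram (bar N lam). 1 - qv ^ (arm_co s + 1) * tv ^ (N - 1 - leg_co s))"
  using main[OF assms] .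

end
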